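(* Let $H=\sum_{a\in\mathcal T}\lambda_aQ_a$ be a Pauli Hamiltonian on $n$ qubits ($d=2^n$) with $|\lambda_a|\le1$ and $|\mathrm{supp}(Q_a)|\le w$ for all $a$, such that each qubit lies in the support of at most $\ell$ terms $Q_a$. Fix an ordering $(a_1,\dots,a_M)$ of $\mathcal T$, a step size $\delta>0$, an integer $p\ge0$, and set $\beta:=(p+1)\delta$, $L:=(p+1)M$, with the periodic convention $a_{j+qM}:=a_j$. Define $\mathcal M_j(X):=e^{\delta\lambda_{a_j}Q_{a_j}}Xe^{\delta\lambda_{a_j}Q_{a_j}}$ for $j=1,\dots,L$, $A_j:=\mathcal M_j\circ\cdots\circ\mathcal M_1(\mathbb I)$, and, for an integer cutoff $k\ge1$ and an observable $O$, the weight-truncated backward propagation $O_L:=O$, $O_{j-1}:=\Pi_{<k}\big(\mathcal M_j^\dagger(O_j)\big)$ for $j=L,\dots,1$. Let $g:=2e\,\beta\,\ell\,w\,e^{\delta}$. If $g\le1$, then $$\big|\operatorname{Tr}(O_0)-\operatorname{Tr}(OA_L)\big|\le d\,e^{4\beta M}\,g^{\lceil k/w\rceil}\,\|O\|_{\mathrm{Pauli},1}.$$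
   Context: $\mathcal P_n=\{I,X,Y,Z\}^{\otimes n}$; the weight $|Q|$ of $Q\in\mathcal P_n$ is its number of non-identity factors and $\mathrm{supp}(Q)$ its set of non-identity positions. For an operator $X$, $\langle Q,X\rangle:=\frac1d\operatorname{Tr}(QX)$ and $\|X\|_{\mathrm{Pauli},1}:=\sum_{Q\in\mathcal P_n}|\langle Q,X\rangle|$. $\Pi_{<k}(X):=\sum_{|Q|<k}\langle Q,X\rangle Q$ is the projector onto the span of Pauli strings of weight $<k$. $\mathcal M_j^\dagger$ is the Hilbert–Schmidt adjoint of $\mathcal M_j$. *)

theory Defs
  imports Complex_Main "Jordan_Normal_Form.Matrix"
begin

datatype pauli = PI | PX | PY | PZ

fun pauli1 :: "pauli \<Rightarrow> nat \<Rightarrow> nat \<Rightarrow> complex" where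
  "pauli1 PI i j = (if i = j then 1 else 0)"
| "pauli1 PX i j = (if i \<noteq> j then 1 else 0)"
| "pauli1 PY i j = (if i = j then 0 else if i = 0 then - \<i> else \<i>)"
| "pauli1 PZ i j = (if i = j then (if i = 0 then 1 else -1) else 0)"

text \<open>A Pauli string is a list of length n; its matrix is the n-fold tensor product,
  acting on the 2^n dimensional space with computational basis indexed by bitstrings
  (bit q of the index = state of qubit q).\<close>
definition pauli_mat :: "nat \<Rightarrow> pauli list \<Rightarrow> complex mat" where
  "pauli_mat n P = mat (2^n) (2^n)
     (\<lambda>(i,j). \<Prod>q<n. pauli1 (P ! q) (i div 2^q mod 2) (j div 2^q mod 2))"

definition pauli_strings :: "nat \<Rightarrow> pauli list set" where
  "pauli_strings n = {P. length P = n}"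

definition supp :: "pauli list \<Rightarrow> nat set" where
  "supp P = {q. q < length P \<and> P ! q \<noteq> PI}"

definition weight :: "pauli list \<Rightarrow> nat" where
  "weight P = card (supp P)"

definition mtrace :: "complex mat \<Rightarrow> complex" where
  "mtrace A = (\<Sum>i<dim_row A. A $$ (i,i))"

definition ctrans :: "complex mat \<Rightarrow> complex mat" where
  "ctrans A = mat (dim_col A) (dim_row A) (\<lambda>(i,j). cnj (A $$ (j,i)))"

definition mexp :: "complex mat \<Rightarrow> complex mat" where
  "mexp A = mat (dim_row A) (dim_col A) (\<lambda>(i,j). \<Sum>m. (A ^\<^sub>m m) $$ (i,j) / of_nat (fact m))"

definition pcoef :: "nat \<Rightarrow> pauli list \<Rightarrow> complex mat \<Rightarrow> complex" where
  "pcoef n Q X = mtrace (pauli_mat n Q * X) / 2^n"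

definition pauli_norm1 :: "nat \<Rightarrow> complex mat \<Rightarrow> real" where
  "pauli_norm1 n X = (\<Sum>Q\<in>pauli_strings n. cmod (pcoef n Q X))"

definition trunc :: "nat \<Rightarrow> nat \<Rightarrow> complex mat \<Rightarrow> complex mat" where
  "trunc n k X = mat (2^n) (2^n)
     (\<lambda>(i,j). \<Sum>Q\<in>{Q\<in>pauli_strings n. weight Q < k}. pcoef n Q X * pauli_mat n Q $$ (i,j))"

definition Mmap :: "nat \<Rightarrow> real \<Rightarrow> pauli list \<Rightarrow> complex mat \<Rightarrow> complex mat" where
  "Mmap n c Q X = mexp (of_real c \<cdot>\<^sub>m pauli_mat n Q) * X * mexp (of_real c \<cdot>\<^sub>m pauli_mat n Q)"

text \<open>Hilbert--Schmidt adjoint of \<open>X \<mapsto> E X E\<close>: \<open>Y \<mapsto> E^\<dagger> Y E^\<dagger>\<close>.\<close>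
definition Madj :: "nat \<Rightarrow> real \<Rightarrow> pauli list \<Rightarrow> complex mat \<Rightarrow> complex mat" where
  "Madj n c Q Y = ctrans (mexp (of_real c \<cdot>\<^sub>m pauli_mat n Q)) * Y
                  * ctrans (mexp (of_real c \<cdot>\<^sub>m pauli_mat n Q))"

definition term_at :: "'a list \<Rightarrow> nat \<Rightarrow> 'a" where
  "term_at ord j = ord ! ((j - 1) mod length ord)"

fun fwd :: "(nat \<Rightarrow> complex mat \<Rightarrow> complex mat) \<Rightarrow> complex mat \<Rightarrow> nat \<Rightarrow> complex mat" where
  "fwd F X 0 = X"
| "fwd F X (Suc j) = F (Suc j) (fwd F X j)"

text \<open>Backward: \<open>bwd G L Y i = O_{L-i}\<close> where \<open>O_L = O\<close>, \<open>O_{j-1} = G j O_j\<close>.\<close>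
fun bwd :: "(nat \<Rightarrow> complex mat \<Rightarrow> complex mat) \<Rightarrow> nat \<Rightarrow> complex mat \<Rightarrow> nat \<Rightarrow> complex mat" where
  "bwd G L Y 0 = Y"
| "bwd G L Y (Suc i) = G (L - i) (bwd G L Y i)"

end

theory Submission
  imports Defs
begin
definition allp :: "pauli set" where "allp = {PI, PX, PY, PZ}"

lemma in_allp[simp]: "x \<in> allp"
  unfolding allp_def by (cases x) auto

lemma sum_allp: "(\<Sum>x\<in>allp. f x) = f PI + f PX + f PY + f PZ"
  unfolding allp_def by (simp add: add.assoc)

fun pm1 :: "pauli \<Rightarrow> pauli \<Rightarrow> pauli" where
  "pm1 PI b = b" | "pm1 a PI = a"
| "pm1 PX PX = PI" | "pm1 PX PY = PZ" | "pm1 PX PZ = PY"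
| "pm1 PY PX = PZ" | "pm1 PY PY = PI" | "pm1 PY PZ = PX"
| "pm1 PZ PX = PY" | "pm1 PZ PY = PX" | "pm1 PZ PZ = PI"

fun ph1 :: "pauli \<Rightarrow> pauli \<Rightarrow> complex" where
  "ph1 PI b = 1" | "ph1 a PI = 1"
| "ph1 PX PX = 1" | "ph1 PX PY = \<i>" | "ph1 PX PZ = - \<i>"
| "ph1 PY PX = - \<i>" | "ph1 PY PY = 1" | "ph1 PY PZ = \<i>"
| "ph1 PZ PX = \<i>" | "ph1 PZ PY = - \<i>" | "ph1 PZ PZ = 1"

lemma bit01: "(i::nat) < 2 \<Longrightarrow> i = 0 \<or> i = 1" by auto

lemma pauli1_mult:
  assumes "i < 2" "j < 2"
  shows "pauli1 a i 0 * pauli1 b 0 j + pauli1 a i 1 * pauli1 b 1 j = ph1 a b * pauli1 (pm1 a b) i j"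
  using bit01[OF assms(1)] bit01[OF assms(2)]
  by (cases a; cases b) auto

lemma pauli1_trace: "pauli1 a 0 0 + pauli1 a 1 1 = (if a = PI then 2 else 0)"
  by (cases a) auto

lemma pauli1_herm: "i < 2 \<Longrightarrow> j < 2 \<Longrightarrow> pauli1 a j i = cnj (pauli1 a i j)"
  by (cases a) auto

lemma pauli1_complete:
  assumes "a < 2" "b < 2" "i < 2" "j < 2"
  shows "(\<Sum>x\<in>allp. pauli1 x a b * pauli1 x i j) = (if a = j \<and> b = i then 2 else 0)"
  using bit01[OF assms(1)] bit01[OF assms(2)] bit01[OF assms(3)] bit01[OF assms(4)]
  unfolding sum_allp by auto

lemma pm1_comm: "pm1 a b = pm1 b a" by (cases a; cases b) auto
lemma pm1_self[simp]: "pm1 a a = PI" by (cases a) auto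
lemma ph1_self[simp]: "ph1 a a = 1" by (cases a) auto
lemma pm1_cancel[simp]: "pm1 a (pm1 a b) = b" by (cases a; cases b) auto
lemma pm1_cancel2[simp]: "pm1 (pm1 a b) b = a" by (cases a; cases b) auto
lemma pm1_PI_iff: "pm1 a b = PI \<longleftrightarrow> a = b" by (cases a; cases b) auto
lemma pm1_PI2[simp]: "pm1 a PI = a" by (cases a) auto
lemma ph1_norm[simp]: "cmod (ph1 a b) = 1" by (cases a; cases b) auto

lemma bitsum:
  fixes f :: "nat \<Rightarrow> nat \<Rightarrow> 'a::comm_semiring_1"
  shows "(\<Sum>k<2^n. \<Prod>q<n. f q (k div 2^q mod 2)) = (\<Prod>q<n. f q 0 + f q 1)"
proof (induction n)
  case 0
  then show ?case by simp
next
  case (Suc n)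
  have split: "(\<Sum>k<2^Suc n. g k) = (\<Sum>k<2^n. g k) + (\<Sum>k<2^n. g (k + 2^n))" for g :: "nat \<Rightarrow> 'a"
  proof -
    have "(\<Sum>k<2^Suc n. g k) = (\<Sum>k\<in>{0..<2^n}. g k) + (\<Sum>k\<in>{2^n..<2^n+2^n}. g k)"
      by (simp add: lessThan_atLeast0 sum.atLeastLessThan_concat mult_2)
    also have "(\<Sum>k\<in>{2^n..<2^n+2^n}. g k) = (\<Sum>k\<in>{0..<2^n}. g (k + 2^n))"
      using sum.shift_bounds_nat_ivl[of g 0 "2^n" "2^n"] by simp
    finally show ?thesis by (simp add: lessThan_atLeast0)
  qed
  have lowbits: "(k + 2^n) div 2^q mod 2 = k div 2^q mod 2" if "q < n" for k q :: nat
  proof -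
    have "(k + 2^n) div 2^q = k div 2^q + 2^(n-q)"
      using that by (simp add: power_diff div_add1_eq[of k "2^n" "2^q"] le_imp_power_dvd)
    moreover have "even ((2::nat)^(n-q))" using that by simp
    then obtain t where "(2::nat)^(n-q) = 2 * t" by blast
    ultimately show ?thesis by simp
  qed
  have top0: "k div 2^n mod 2 = 0" if "k < 2^n" for k :: nat using that by simp
  have top1: "(k + 2^n) div 2^n mod 2 = 1" if "k < 2^n" for k :: nat using that by simp
  have "(\<Sum>k<2^Suc n. \<Prod>q<Suc n. f q (k div 2^q mod 2))
      = (\<Sum>k<2^n. (\<Prod>q<n. f q (k div 2^q mod 2)) * f n 0)
      + (\<Sum>k<2^n. (\<Prod>q<n. f q (k div 2^q mod 2)) * f n 1)"
    unfolding split prod.lessThan_Suc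
    by (intro arg_cong2[where f="(+)"] sum.cong refl arg_cong2[where f="(*)"] prod.cong)
       (auto simp: lowbits top0 top1)
  also have "\<dots> = (\<Prod>q<n. f q 0 + f q 1) * (f n 0 + f n 1)"
    by (simp add: sum_distrib_right[symmetric] Suc distrib_left)
  finally show ?case by simp
qed

lemma bits_inj:
  fixes i j :: nat
  assumes "i < 2^n" "j < 2^n" "\<forall>q<n. i div 2^q mod 2 = j div 2^q mod 2"
  shows "i = j"
  using assms
proof (induction n arbitrary: i j)
  case 0
  then show ?case by simp
next
  case (Suc n)
  have m: "i mod 2 = j mod 2" using Suc.prems(3) by force
  have "\<forall>q<n. i div 2 div 2^q mod 2 = j div 2 div 2^q mod 2"
  proof (intro allI impI)
    fix q assume "q < n"
    then have "Suc q < Suc n" by simp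
    then have "i div 2^(Suc q) mod 2 = j div 2^(Suc q) mod 2" using Suc.prems(3) by blast
    then show "i div 2 div 2^q mod 2 = j div 2 div 2^q mod 2" by (simp add: div_mult2_eq)
  qed
  moreover have "i div 2 < 2^n" "j div 2 < 2^n" using Suc.prems by auto
  ultimately have "i div 2 = j div 2" using Suc.IH by blast
  with m show ?case by (metis div_mult_mod_eq)
qed

lemma prod_bits_eq:
  fixes i j :: nat
  assumes "i < 2^n" "j < 2^n"
  shows "(\<Prod>q<n. (if i div 2^q mod 2 = j div 2^q mod 2 then (c::complex) else 0)) = (if i = j then c^n else 0)"
proof (cases "i = j")
  case True then show ?thesis by simp
next
  case False
  then obtain q where "q < n" "i div 2^q mod 2 \<noteq> j div 2^q mod 2" using bits_inj[OF assms] by blast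
  then have "(\<Prod>q<n. (if i div 2^q mod 2 = j div 2^q mod 2 then (c::complex) else 0)) = 0"
    by (intro prod_zero) auto
  then show ?thesis using False by simp
qed

definition strs :: "nat \<Rightarrow> pauli list set" where "strs n = {P. length P = n}"

lemma strs_Suc: "strs (Suc n) = (\<lambda>(x, R). x # R) ` (allp \<times> strs n)"
  unfolding strs_def by (auto simp: image_iff length_Suc_conv)

lemma finite_strs[simp]: "finite (strs n)"
proof (induction n)
  case 0 then show ?case by (simp add: strs_def)
next
  case (Suc n) then show ?case by (simp add: strs_Suc allp_def)
qed

lemma strsum:
  fixes f :: "nat \<Rightarrow> pauli \<Rightarrow> 'a::comm_semiring_1"
  shows "(\<Sum>R\<in>strs n. \<Prod>q<n. f q (R!q)) = (\<Prod>q<n. \<Sum>x\<in>allp. f q x)"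
proof (induction n arbitrary: f)
  case 0
  then show ?case by (simp add: strs_def)
next
  case (Suc n)
  have inj: "inj_on (\<lambda>(x, R). x # R) (allp \<times> strs n)" by (auto simp: inj_on_def)
  have "(\<Sum>R\<in>strs (Suc n). \<Prod>q<Suc n. f q (R!q))
      = (\<Sum>(x,R)\<in>allp \<times> strs n. f 0 x * (\<Prod>q<n. f (Suc q) (R!q)))"
    unfolding strs_Suc sum.reindex[OF inj]
    by (intro sum.cong refl) (auto simp only: prod.lessThan_Suc_shift nth_Cons_0 nth_Cons_Suc o_def split: prod.splits)
  also have "\<dots> = (\<Sum>x\<in>allp. f 0 x) * (\<Sum>R\<in>strs n. \<Prod>q<n. f (Suc q) (R!q))"
    by (simp add: sum.cartesian_product[symmetric] sum_product)
  also have "\<dots> = (\<Sum>x\<in>allp. f 0 x) * (\<Prod>q<n. \<Sum>x\<in>allp. f (Suc q) x)"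
    using Suc.IH[of "\<lambda>q. f (Suc q)"] by simp
  finally show ?case by (simp only: prod.lessThan_Suc_shift)
qed

lemma pauli_strings_eq: "pauli_strings n = strs n"
  unfolding pauli_strings_def strs_def ..

definition pmul :: "pauli list \<Rightarrow> pauli list \<Rightarrow> pauli list" where
  "pmul P R = map (\<lambda>q. pm1 (P!q) (R!q)) [0..<length P]"

definition ph :: "nat \<Rightarrow> pauli list \<Rightarrow> pauli list \<Rightarrow> complex" where
  "ph n P R = (\<Prod>q<n. ph1 (P!q) (R!q))"

abbreviation Idn :: "nat \<Rightarrow> pauli list" where "Idn n \<equiv> replicate n PI"

lemma length_pmul[simp]: "length (pmul P R) = length P" by (simp add: pmul_def)
lemma nth_pmul[simp]: "q < length P \<Longrightarrow> pmul P R ! q = pm1 (P!q) (R!q)" by (simp add: pmul_def)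
lemma pmul_strs[simp]: "P \<in> strs n \<Longrightarrow> pmul P R \<in> strs n" by (simp add: strs_def)

lemma pmul_comm: "length P = length R \<Longrightarrow> pmul P R = pmul R P"
  by (simp add: pmul_def pm1_comm)
lemma pmul_cancel[simp]: "length P = length R \<Longrightarrow> pmul P (pmul P R) = R"
  by (simp add: list_eq_iff_nth_eq)
lemma pmul_cancel2[simp]: "length P = length R \<Longrightarrow> pmul (pmul P R) R = P"
  by (simp add: list_eq_iff_nth_eq)
lemma pmul_Idn_iff: "length P = n \<Longrightarrow> length R = n \<Longrightarrow> pmul P R = Idn n \<longleftrightarrow> P = R"
  by (auto simp: list_eq_iff_nth_eq pm1_PI_iff)
lemma pmul_self[simp]: "pmul P P = Idn (length P)"
  by (simp add: list_eq_iff_nth_eq)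
lemma ph_self[simp]: "ph n P P = 1" by (simp add: ph_def)
lemma ph_norm[simp]: "cmod (ph n P R) = 1" by (simp add: ph_def prod_norm[symmetric])

lemma supp_pmul: "length P = length R \<Longrightarrow> supp P \<subseteq> supp (pmul P R) \<union> supp R"
  unfolding supp_def by auto

lemma Idn_iff: "length P = n \<Longrightarrow> P = Idn n \<longleftrightarrow> (\<forall>q<n. P!q = PI)"
  by (auto simp: list_eq_iff_nth_eq)

lemma supp_empty_iff: "length P = n \<Longrightarrow> supp P = {} \<longleftrightarrow> P = Idn n"
  by (auto simp: supp_def Idn_iff)

lemma pmat_carrier[simp]: "pauli_mat n P \<in> carrier_mat (2^n) (2^n)"
  by (simp add: pauli_mat_def)
lemma pmat_dim[simp]: "dim_row (pauli_mat n P) = 2^n" "dim_col (pauli_mat n P) = 2^n"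
  by (simp_all add: pauli_mat_def)

lemma pmat_entry: "i < 2^n \<Longrightarrow> j < 2^n \<Longrightarrow>
  pauli_mat n P $$ (i,j) = (\<Prod>q<n. pauli1 (P ! q) (i div 2^q mod 2) (j div 2^q mod 2))"
  by (simp add: pauli_mat_def)

lemma mult_entry:
  assumes "A \<in> carrier_mat d d" "B \<in> carrier_mat d d" "i < d" "j < d"
  shows "(A * B) $$ (i,j) = (\<Sum>k<d. A $$ (i,k) * B $$ (k,j))"
  using assms by (simp add: scalar_prod_def lessThan_atLeast0)

lemma pmat_mult:
  assumes "length P = n" "length R = n"
  shows "pauli_mat n P * pauli_mat n R = ph n P R \<cdot>\<^sub>m pauli_mat n (pmul P R)"
proof (rule eq_matI)
  fix i j assume ij: "i < dim_row (ph n P R \<cdot>\<^sub>m pauli_mat n (pmul P R))"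
    "j < dim_col (ph n P R \<cdot>\<^sub>m pauli_mat n (pmul P R))"
  then have i: "i < 2^n" and j: "j < 2^n" by auto
  have "(pauli_mat n P * pauli_mat n R) $$ (i,j)
     = (\<Sum>k<2^n. \<Prod>q<n. pauli1 (P!q) (i div 2^q mod 2) (k div 2^q mod 2) * pauli1 (R!q) (k div 2^q mod 2) (j div 2^q mod 2))"
    using i j by (simp add: mult_entry[OF pmat_carrier pmat_carrier i j] pmat_entry prod.distrib)
  also have "\<dots> = (\<Prod>q<n. pauli1 (P!q) (i div 2^q mod 2) 0 * pauli1 (R!q) 0 (j div 2^q mod 2)
                + pauli1 (P!q) (i div 2^q mod 2) 1 * pauli1 (R!q) 1 (j div 2^q mod 2))"
    by (rule bitsum)
  also have "\<dots> = (\<Prod>q<n. ph1 (P!q) (R!q) * pauli1 (pm1 (P!q) (R!q)) (i div 2^q mod 2) (j div 2^q mod 2))"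
    by (intro prod.cong refl pauli1_mult) auto
  also have "\<dots> = (ph n P R \<cdot>\<^sub>m pauli_mat n (pmul P R)) $$ (i,j)"
    using i j assms by (simp add: ph_def pmat_entry prod.distrib)
  finally show "(pauli_mat n P * pauli_mat n R) $$ (i,j) = (ph n P R \<cdot>\<^sub>m pauli_mat n (pmul P R)) $$ (i,j)" .
qed auto

lemma pmat_Idn: "pauli_mat n (Idn n) = 1\<^sub>m (2^n)"
proof (rule eq_matI)
  fix i j assume "i < dim_row (1\<^sub>m (2^n) :: complex mat)" "j < dim_col (1\<^sub>m (2^n) :: complex mat)"
  then have i: "i < 2^n" and j: "j < 2^n" by auto
  have "pauli_mat n (Idn n) $$ (i,j) = (\<Prod>q<n. (if i div 2^q mod 2 = j div 2^q mod 2 then (1::complex) else 0))"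
    using i j by (simp add: pmat_entry)
  also have "\<dots> = (if i = j then 1 else 0)" using prod_bits_eq[OF i j, of 1] by simp
  finally show "pauli_mat n (Idn n) $$ (i,j) = 1\<^sub>m (2^n) $$ (i,j)" using i j by simp
qed auto

lemma mtrace_pmat:
  assumes "length P = n"
  shows "mtrace (pauli_mat n P) = (if P = Idn n then 2^n else 0)"
proof -
  have "mtrace (pauli_mat n P) = (\<Sum>k<2^n. \<Prod>q<n. pauli1 (P!q) (k div 2^q mod 2) (k div 2^q mod 2))"
    by (simp add: mtrace_def pmat_entry)
  also have "\<dots> = (\<Prod>q<n. pauli1 (P!q) 0 0 + pauli1 (P!q) 1 1)" by (rule bitsum)
  also have "\<dots> = (\<Prod>q<n. if P!q = PI then 2 else 0)"
    by (intro prod.cong refl) (metis One_nat_def pauli1_trace)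
  also have "\<dots> = (if P = Idn n then 2^n else 0)"
  proof (cases "P = Idn n")
    case True then show ?thesis by simp
  next
    case False
    then obtain q where "q < n" "P!q \<noteq> PI" using Idn_iff[OF assms] by blast
    then have "(\<Prod>q<n. if P!q = PI then (2::complex) else 0) = 0" by (intro prod_zero) auto
    then show ?thesis using False by simp
  qed
  finally show ?thesis .
qed

lemma pmat_complete:
  assumes "a < 2^n" "b < 2^n" "i < 2^n" "j < 2^n"
  shows "(\<Sum>R\<in>strs n. pauli_mat n R $$ (a,b) * pauli_mat n R $$ (i,j)) = (if a = j \<and> b = i then 2^n else 0)"
proof -
  have "(\<Sum>R\<in>strs n. pauli_mat n R $$ (a,b) * pauli_mat n R $$ (i,j))
     = (\<Sum>R\<in>strs n. \<Prod>q<n. pauli1 (R!q) (a div 2^q mod 2) (b div 2^q mod 2) * pauli1 (R!q) (i div 2^q mod 2) (j div 2^q mod 2))"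
    using assms by (simp add: pmat_entry prod.distrib)
  also have "\<dots> = (\<Prod>q<n. \<Sum>x\<in>allp. pauli1 x (a div 2^q mod 2) (b div 2^q mod 2) * pauli1 x (i div 2^q mod 2) (j div 2^q mod 2))"
    by (rule strsum)
  also have "\<dots> = (\<Prod>q<n. (if a div 2^q mod 2 = j div 2^q mod 2 then 1 else 0) * (if b div 2^q mod 2 = i div 2^q mod 2 then 2 else 0))"
    by (intro prod.cong refl) (simp add: pauli1_complete)
  also have "\<dots> = (\<Prod>q<n. (if a div 2^q mod 2 = j div 2^q mod 2 then 1 else 0)) * (\<Prod>q<n. (if b div 2^q mod 2 = i div 2^q mod 2 then 2 else 0))"
    by (rule prod.distrib)
  also have "\<dots> = (if a = j then 1 else 0) * (if b = i then 2^n else 0)"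
    using prod_bits_eq[OF assms(1,4), of 1] prod_bits_eq[OF assms(2,3), of 2] by simp
  finally show ?thesis by simp
qed

lemma mtrace_mult:
  assumes "A \<in> carrier_mat d d" "B \<in> carrier_mat d d"
  shows "mtrace (A * B) = (\<Sum>i<d. \<Sum>k<d. A $$ (i,k) * B $$ (k,i))"
proof -
  have "dim_row (A * B) = d" using assms by simp
  then show ?thesis unfolding mtrace_def
    by (intro sum.cong) (auto simp: mult_entry[OF assms])
qed

lemma mtrace_comm:
  assumes "A \<in> carrier_mat d d" "B \<in> carrier_mat d d"
  shows "mtrace (A * B) = mtrace (B * A)"
  unfolding mtrace_mult[OF assms] mtrace_mult[OF assms(2,1)]
  by (subst sum.swap) (simp add: mult.commute)

lemma mtrace_add:
  assumes "A \<in> carrier_mat d d" "B \<in> carrier_mat d d"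
  shows "mtrace (A + B) = mtrace A + mtrace B"
  using assms by (simp add: mtrace_def sum.distrib)

lemma mtrace_smult:
  assumes "A \<in> carrier_mat d d"
  shows "mtrace (c \<cdot>\<^sub>m A) = c * mtrace A"
  using assms by (simp add: mtrace_def sum_distrib_left)

lemma mtrace_pp:
  assumes "length R = n" "length P = n"
  shows "mtrace (pauli_mat n R * pauli_mat n P) = (if R = P then 2^n else 0)"
  using assms by (simp add: pmat_mult mtrace_smult[OF pmat_carrier] mtrace_pmat pmul_Idn_iff)

lemma pcoef_pmat:
  assumes "length R = n" "length P = n"
  shows "pcoef n R (pauli_mat n P) = (if R = P then 1 else 0)"
  using assms by (simp add: pcoef_def mtrace_pp)

lemma pmat_expand:
  assumes X: "X \<in> carrier_mat (2^n) (2^n)" and a: "a < 2^n" and b: "b < 2^n"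
  shows "X $$ (a,b) = (\<Sum>R\<in>strs n. pcoef n R X * pauli_mat n R $$ (a,b))"
proof -
  have "pcoef n R X * pauli_mat n R $$ (a,b)
      = (\<Sum>i<2^n. \<Sum>k<2^n. X $$ (k,i) * (pauli_mat n R $$ (i,k) * pauli_mat n R $$ (a,b))) / 2^n" for R
    unfolding pcoef_def mtrace_mult[OF pmat_carrier X]
    by (simp add: sum_distrib_left sum_distrib_right mult_ac)
  then have "(\<Sum>R\<in>strs n. pcoef n R X * pauli_mat n R $$ (a,b))
      = (\<Sum>R\<in>strs n. \<Sum>i<2^n. \<Sum>k<2^n. X $$ (k,i) * (pauli_mat n R $$ (i,k) * pauli_mat n R $$ (a,b))) / 2^n"
    by (simp add: sum_divide_distrib)
  also have "(\<Sum>R\<in>strs n. \<Sum>i<2^n. \<Sum>k<2^n. X $$ (k,i) * (pauli_mat n R $$ (i,k) * pauli_mat n R $$ (a,b)))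
     = (\<Sum>i<2^n. \<Sum>k<2^n. \<Sum>R\<in>strs n. X $$ (k,i) * (pauli_mat n R $$ (i,k) * pauli_mat n R $$ (a,b)))"
    by (subst sum.swap) (subst sum.swap, rule refl)
  also have "\<dots> = (\<Sum>i<2^n. \<Sum>k<2^n. X $$ (k,i) * (if i = b \<and> k = a then 2^n else 0))"
    by (intro sum.cong refl) (simp add: sum_distrib_left[symmetric] pmat_complete a b)
  also have "\<dots> = (\<Sum>i<2^n. if i = b then X $$ (a,b) * 2^n else 0)"
  proof (intro sum.cong refl)
    fix i assume "i \<in> {..<(2::nat)^n}"
    show "(\<Sum>k<2^n. X $$ (k,i) * (if i = b \<and> k = a then 2^n else 0)) = (if i = b then X $$ (a,b) * 2^n else 0)"
      using a by (cases "i = b") (simp_all add: if_distrib[of "\<lambda>x. _ * x"] sum.delta' cong: if_cong)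
  qed
  also have "\<dots> = X $$ (a,b) * 2^n" using b by (simp add: sum.delta')
  finally show ?thesis by simp
qed

lemma mtrace_lin:
  assumes Y: "Y \<in> carrier_mat (2^n) (2^n)" and M: "M \<in> carrier_mat (2^n) (2^n)"
    and ent: "\<And>k i. k < 2^n \<Longrightarrow> i < 2^n \<Longrightarrow> M $$ (k,i) = (\<Sum>R\<in>strs n. f R * pauli_mat n R $$ (k,i))"
  shows "mtrace (Y * M) = (\<Sum>R\<in>strs n. f R * mtrace (Y * pauli_mat n R))"
proof -
  have "mtrace (Y * M) = (\<Sum>i<2^n. \<Sum>k<2^n. \<Sum>R\<in>strs n. f R * (Y $$ (i,k) * pauli_mat n R $$ (k,i)))"
    unfolding mtrace_mult[OF Y M]
    by (intro sum.cong refl) (simp add: ent sum_distrib_left mult_ac)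
  also have "\<dots> = (\<Sum>R\<in>strs n. \<Sum>i<2^n. \<Sum>k<2^n. f R * (Y $$ (i,k) * pauli_mat n R $$ (k,i)))"
    by (subst (2) sum.swap) (subst sum.swap, rule refl)
  also have "\<dots> = (\<Sum>R\<in>strs n. f R * mtrace (Y * pauli_mat n R))"
    unfolding mtrace_mult[OF Y pmat_carrier] by (simp add: sum_distrib_left)
  finally show ?thesis .
qed

lemma parseval:
  assumes X: "X \<in> carrier_mat (2^n) (2^n)" and Y: "Y \<in> carrier_mat (2^n) (2^n)"
  shows "mtrace (Y * X) = 2^n * (\<Sum>R\<in>strs n. pcoef n R X * pcoef n R Y)"
proof -
  have "mtrace (Y * X) = (\<Sum>R\<in>strs n. pcoef n R X * mtrace (Y * pauli_mat n R))"
    by (rule mtrace_lin[OF Y X]) (simp add: pmat_expand[OF X])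
  also have "\<dots> = (\<Sum>R\<in>strs n. pcoef n R X * (2^n * pcoef n R Y))"
    by (intro sum.cong refl) (simp add: pcoef_def mtrace_comm[OF Y pmat_carrier])
  finally show ?thesis by (simp add: sum_distrib_left mult_ac)
qed

lemma trunc_carrier[simp]: "trunc n k X \<in> carrier_mat (2^n) (2^n)"
  by (simp add: trunc_def)

lemma pcoef_trunc:
  assumes S: "S \<in> strs n"
  shows "pcoef n S (trunc n k X) = (if weight S < k then pcoef n S X else 0)"
proof -
  define f where "f R = (if weight R < k then pcoef n R X else 0)" for R
  have ent: "trunc n k X $$ (a,b) = (\<Sum>R\<in>strs n. f R * pauli_mat n R $$ (a,b))"
    if "a < 2^n" "b < 2^n" for a b
  proof -
    have "trunc n k X $$ (a,b) = (\<Sum>R\<in>{Q \<in> strs n. weight Q < k}. pcoef n R X * pauli_mat n R $$ (a,b))"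
      using that by (simp add: trunc_def pauli_strings_eq)
    also have "\<dots> = (\<Sum>R\<in>strs n. f R * pauli_mat n R $$ (a,b))"
      unfolding f_def by (subst sum.inter_filter) (auto intro!: sum.cong)
    finally show ?thesis .
  qed
  have "mtrace (pauli_mat n S * trunc n k X) = (\<Sum>R\<in>strs n. f R * mtrace (pauli_mat n S * pauli_mat n R))"
    by (rule mtrace_lin[OF pmat_carrier trunc_carrier]) (rule ent)
  also have "\<dots> = (\<Sum>R\<in>strs n. (if S = R then f R * 2^n else 0))"
    using S by (intro sum.cong refl) (simp add: mtrace_pp strs_def)
  also have "\<dots> = f S * 2^n" using S by (simp add: sum.delta)
  finally show ?thesis by (simp add: pcoef_def f_def)
qed

lemma smult_smult_mat: "a \<cdot>\<^sub>m (b \<cdot>\<^sub>m A) = (a * b) \<cdot>\<^sub>m (A :: 'a::semigroup_mult mat)"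
  by (rule eq_matI) (auto simp: mult.assoc)

lemma smult_one_mat[simp]: "(1::'a::monoid_mult) \<cdot>\<^sub>m A = A"
  by (rule eq_matI) auto

lemma pmat_sq:
  assumes "length P = n"
  shows "pauli_mat n P * pauli_mat n P = 1\<^sub>m (2^n)"
  using assms by (simp add: pmat_mult pmat_Idn)

lemma pow_smult_pmat:
  assumes "length P = n"
  shows "(c \<cdot>\<^sub>m pauli_mat n P) ^\<^sub>m m = c^m \<cdot>\<^sub>m (if even m then 1\<^sub>m (2^n) else pauli_mat n P)"
proof (induction m)
  case 0
  then show ?case by (rule eq_matI) auto
next
  case (Suc m)
  have "(c \<cdot>\<^sub>m pauli_mat n P) ^\<^sub>m Suc m = (c^m \<cdot>\<^sub>m (if even m then 1\<^sub>m (2^n) else pauli_mat n P)) * (c \<cdot>\<^sub>m pauli_mat n P)"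
    by (simp only: pow_mat.simps Suc.IH)
  also have "\<dots> = (c^m * c) \<cdot>\<^sub>m ((if even m then 1\<^sub>m (2^n) else pauli_mat n P) * pauli_mat n P)"
  proof -
    have B: "(if even m then 1\<^sub>m (2^n) else pauli_mat n P) \<in> carrier_mat (2^n) (2^n)" by simp
    show ?thesis
      by (simp only: mult_smult_assoc_mat[OF B smult_carrier_mat[OF pmat_carrier]]
        mult_smult_distrib[OF B pmat_carrier] smult_smult_mat)
  qed
  also have "(if even m then 1\<^sub>m (2^n) else pauli_mat n P) * pauli_mat n P = (if even (Suc m) then 1\<^sub>m (2^n) else pauli_mat n P)"
    using assms by (simp add: pmat_sq)
  finally show ?case by (simp add: mult.commute)
qed

definition Emat :: "nat \<Rightarrow> real \<Rightarrow> pauli list \<Rightarrow> complex mat" where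
  "Emat n c P = of_real (cosh c) \<cdot>\<^sub>m 1\<^sub>m (2^n) + of_real (sinh c) \<cdot>\<^sub>m pauli_mat n P"

lemma Emat_carrier[simp]: "Emat n c P \<in> carrier_mat (2^n) (2^n)"
  by (simp add: Emat_def)

lemma mexp_pauli:
  assumes "length P = n"
  shows "mexp (of_real c \<cdot>\<^sub>m pauli_mat n P) = Emat n c P"
proof (rule eq_matI)
  fix i j assume "i < dim_row (Emat n c P)" "j < dim_col (Emat n c P)"
  then have i: "i < 2^n" and j: "j < 2^n" by (auto simp: Emat_def)
  let ?d = "(1\<^sub>m (2^n) :: complex mat) $$ (i,j)" and ?p = "pauli_mat n P $$ (i,j)"
  have t: "((of_real c \<cdot>\<^sub>m pauli_mat n P) ^\<^sub>m m) $$ (i,j) / of_nat (fact m)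
      = of_real (if even m then c^m / fact m else 0) * ?d + of_real (if even m then 0 else c^m / fact m) * ?p" for m
    using i j assms by (simp add: pow_smult_pmat)
  have "(\<lambda>m. of_real (if even m then c^m / fact m else 0) * ?d + of_real (if even m then 0 else c^m / fact m) * ?p)
        sums (of_real (cosh c) * ?d + of_real (sinh c) * ?p)"
  proof (intro sums_add sums_mult2 sums_of_real)
    show "(\<lambda>m. if even m then c^m / fact m else 0) sums cosh c"
      proof -
      have "(\<lambda>n. if even n then c ^ n /\<^sub>R fact n else 0) = (\<lambda>m. if even m then c^m / fact m else 0)"
        by (rule ext) (simp add: divide_inverse_commute)
      then show ?thesis using cosh_converges[of c] by simp
    qed
    show "(\<lambda>m. if even m then 0 else c^m / fact m) sums sinh c"
      proof -
      have "(\<lambda>n. if even n then 0 else c ^ n /\<^sub>R fact n) = (\<lambda>m. if even m then 0 else c^m / fact m)"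
        by (rule ext) (simp add: divide_inverse_commute)
      then show ?thesis using sinh_converges[of c] by simp
    qed
  qed
  then have "(\<Sum>m. ((of_real c \<cdot>\<^sub>m pauli_mat n P) ^\<^sub>m m) $$ (i,j) / of_nat (fact m)) = of_real (cosh c) * ?d + of_real (sinh c) * ?p"
    unfolding t by (rule sums_unique[symmetric])
  moreover have "mexp (of_real c \<cdot>\<^sub>m pauli_mat n P) $$ (i,j) = (\<Sum>m. ((of_real c \<cdot>\<^sub>m pauli_mat n P) ^\<^sub>m m) $$ (i,j) / of_nat (fact m))"
    unfolding mexp_def by (subst index_mat) (use i j in auto)
  moreover have "Emat n c P $$ (i,j) = of_real (cosh c) * ?d + of_real (sinh c) * ?p"
    unfolding Emat_def using i j by simp
  ultimately show "mexp (of_real c \<cdot>\<^sub>m pauli_mat n P) $$ (i,j) = Emat n c P $$ (i,j)"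
    by (simp only:)
qed (simp_all add: mexp_def Emat_def)

lemma ctrans_Emat:
  assumes "length P = n"
  shows "ctrans (Emat n c P) = Emat n c P"
proof (rule eq_matI)
  fix i j assume "i < dim_row (Emat n c P)" "j < dim_col (Emat n c P)"
  then have i: "i < 2^n" and j: "j < 2^n" by (auto simp: Emat_def)
  have h: "pauli_mat n P $$ (j,i) = cnj (pauli_mat n P $$ (i,j))"
    unfolding pmat_entry[OF i j] pmat_entry[OF j i] cnj_prod
    by (intro prod.cong refl pauli1_herm) auto
  have "ctrans (Emat n c P) $$ (i,j) = cnj (Emat n c P $$ (j,i))"
    unfolding ctrans_def by (subst index_mat) (use i j in \<open>auto simp: Emat_def\<close>)
  also have "\<dots> = Emat n c P $$ (i,j)"
    unfolding Emat_def using i j h by auto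
  finally show "ctrans (Emat n c P) $$ (i,j) = Emat n c P $$ (i,j)" .
qed (simp_all add: ctrans_def Emat_def)

lemma Emat_left:
  assumes X: "X \<in> carrier_mat (2^n) (2^n)"
  shows "Emat n c P * X = of_real (cosh c) \<cdot>\<^sub>m X + of_real (sinh c) \<cdot>\<^sub>m (pauli_mat n P * X)"
proof -
  have "Emat n c P * X = (of_real (cosh c) \<cdot>\<^sub>m 1\<^sub>m (2^n)) * X + (of_real (sinh c) \<cdot>\<^sub>m pauli_mat n P) * X"
    unfolding Emat_def by (rule add_mult_distrib_mat[OF _ _ X]) auto
  also have "\<dots> = of_real (cosh c) \<cdot>\<^sub>m X + of_real (sinh c) \<cdot>\<^sub>m (pauli_mat n P * X)"
    by (simp only: mult_smult_assoc_mat[OF one_carrier_mat X] left_mult_one_mat[OF X] mult_smult_assoc_mat[OF pmat_carrier X])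
  finally show ?thesis .
qed

lemma Emat_right:
  assumes X: "X \<in> carrier_mat (2^n) (2^n)"
  shows "X * Emat n c P = of_real (cosh c) \<cdot>\<^sub>m X + of_real (sinh c) \<cdot>\<^sub>m (X * pauli_mat n P)"
proof -
  have "X * Emat n c P = X * (of_real (cosh c) \<cdot>\<^sub>m 1\<^sub>m (2^n)) + X * (of_real (sinh c) \<cdot>\<^sub>m pauli_mat n P)"
    unfolding Emat_def by (rule mult_add_distrib_mat[OF X]) auto
  also have "\<dots> = of_real (cosh c) \<cdot>\<^sub>m X + of_real (sinh c) \<cdot>\<^sub>m (X * pauli_mat n P)"
    by (simp only: mult_smult_distrib[OF X one_carrier_mat] right_mult_one_mat[OF X] mult_smult_distrib[OF X pmat_carrier])
  finally show ?thesis .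
qed

definition alph :: "nat \<Rightarrow> real \<Rightarrow> pauli list \<Rightarrow> pauli list \<Rightarrow> complex" where
  "alph n c P S = of_real (cosh c) * of_real (cosh c)
      + of_real (sinh c) * of_real (sinh c) * ph n P S * ph n (pmul P S) P"

definition gamm :: "nat \<Rightarrow> real \<Rightarrow> pauli list \<Rightarrow> pauli list \<Rightarrow> complex" where
  "gamm n c P S = of_real (cosh c) * of_real (sinh c) * (ph n P S + ph n S P)"

lemma ESE:
  assumes P: "length P = n" and S: "length S = n"
  shows "Emat n c P * pauli_mat n S * Emat n c P
       = alph n c P S \<cdot>\<^sub>m pauli_mat n S + gamm n c P S \<cdot>\<^sub>m pauli_mat n (pmul P S)"
proof -
  let ?a = "of_real (cosh c) :: complex" and ?b = "of_real (sinh c) :: complex"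
  let ?S = "pauli_mat n S" and ?S' = "pauli_mat n (pmul P S)" and ?P = "pauli_mat n P"
  have c1: "?P * ?S = ph n P S \<cdot>\<^sub>m ?S'" using P S by (simp add: pmat_mult)
  have c2: "?S * ?P = ph n S P \<cdot>\<^sub>m ?S'" using P S by (simp add: pmat_mult pmul_comm)
  have c3: "?S' * ?P = ph n (pmul P S) P \<cdot>\<^sub>m ?S" using P S by (simp add: pmat_mult pmul_comm)
  have ES: "Emat n c P * ?S = ?a \<cdot>\<^sub>m ?S + (?b * ph n P S) \<cdot>\<^sub>m ?S'"
    by (simp add: Emat_left c1 smult_smult_mat)
  have ESP: "(Emat n c P * ?S) * ?P = (?a * ph n S P) \<cdot>\<^sub>m ?S' + (?b * ph n P S * ph n (pmul P S) P) \<cdot>\<^sub>m ?S"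
    unfolding ES
    by (simp only: add_mult_distrib_mat[OF smult_carrier_mat[OF pmat_carrier] smult_carrier_mat[OF pmat_carrier] pmat_carrier]
          mult_smult_assoc_mat[OF pmat_carrier pmat_carrier] c2 c3 smult_smult_mat mult.assoc)
  have "Emat n c P * ?S * Emat n c P = ?a \<cdot>\<^sub>m (Emat n c P * ?S) + ?b \<cdot>\<^sub>m ((Emat n c P * ?S) * ?P)"
    by (rule Emat_right) (rule mult_carrier_mat[OF Emat_carrier pmat_carrier])
  also have "\<dots> = alph n c P S \<cdot>\<^sub>m ?S + gamm n c P S \<cdot>\<^sub>m ?S'"
    unfolding ESP unfolding ES
    by (rule eq_matI) (auto simp: alph_def gamm_def algebra_simps)
  finally show ?thesis .
qed

lemma pcoef_EXE:
  assumes P: "length P = n" and S: "length S = n" and X: "X \<in> carrier_mat (2^n) (2^n)"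
  shows "pcoef n S (Emat n c P * X * Emat n c P)
       = alph n c P S * pcoef n S X + gamm n c P S * pcoef n (pmul P S) X"
proof -
  let ?E = "Emat n c P" and ?S = "pauli_mat n S"
  have cE: "?E \<in> carrier_mat (2^n) (2^n)" and cS: "?S \<in> carrier_mat (2^n) (2^n)" by simp_all
  have "?S * (?E * X * ?E) = (?S * ?E * X) * ?E"
    using cE cS X by (metis assoc_mult_mat mult_carrier_mat)
  then have "mtrace (?S * (?E * X * ?E)) = mtrace ((?S * ?E * X) * ?E)" by simp
  also have "\<dots> = mtrace (?E * (?S * ?E * X))"
    by (rule mtrace_comm[of _ "2^n"]) (use cE cS X in \<open>meson mult_carrier_mat\<close>)+
  also have "?E * (?S * ?E * X) = (?E * ?S * ?E) * X"
    using cE cS X by (metis assoc_mult_mat mult_carrier_mat)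
  also have "\<dots> = (alph n c P S \<cdot>\<^sub>m ?S + gamm n c P S \<cdot>\<^sub>m pauli_mat n (pmul P S)) * X"
    by (simp only: ESE[OF P S])
  also have "\<dots> = alph n c P S \<cdot>\<^sub>m (?S * X) + gamm n c P S \<cdot>\<^sub>m (pauli_mat n (pmul P S) * X)"
    by (simp only: add_mult_distrib_mat[OF smult_carrier_mat[OF pmat_carrier] smult_carrier_mat[OF pmat_carrier] X]
        mult_smult_assoc_mat[OF pmat_carrier X])
  also have "mtrace \<dots> = alph n c P S * mtrace (?S * X) + gamm n c P S * mtrace (pauli_mat n (pmul P S) * X)"
  proof -
    have c1: "?S * X \<in> carrier_mat (2^n) (2^n)" using cS X by (meson mult_carrier_mat)
    have c2: "pauli_mat n (pmul P S) * X \<in> carrier_mat (2^n) (2^n)" using X by (meson mult_carrier_mat pmat_carrier)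
    show ?thesis
      by (simp only: mtrace_add[OF smult_carrier_mat[OF c1] smult_carrier_mat[OF c2]] mtrace_smult[OF c1] mtrace_smult[OF c2])
  qed
  finally show ?thesis by (simp add: pcoef_def add_divide_distrib)
qed

lemma alph_bound:
  assumes "length P = n"
  shows "cmod (alph n c P S) \<le> cosh (2 * c)"
proof -
  have "cmod (alph n c P S) \<le> cmod (of_real (cosh c) * of_real (cosh c) :: complex)
      + cmod (of_real (sinh c) * of_real (sinh c) * ph n P S * ph n (pmul P S) P :: complex)"
    unfolding alph_def by (rule norm_triangle_ineq)
  also have "\<dots> = cosh c ^ 2 + sinh c ^ 2"
    by (simp add: norm_mult power2_eq_square abs_mult_self_eq)
  finally show ?thesis by (simp add: cosh_double)
qed

lemma gamm_bound:
  assumes "length P = n"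
  shows "cmod (gamm n c P S) \<le> \<bar>sinh (2 * c)\<bar>"
proof -
  have "cmod (ph n P S + ph n S P) \<le> 2"
    using norm_triangle_ineq[of "ph n P S" "ph n S P"] by simp
  then have "cmod (gamm n c P S) \<le> \<bar>cosh c\<bar> * \<bar>sinh c\<bar> * 2"
    unfolding gamm_def by (simp add: norm_mult mult_left_mono)
  also have "\<dots> = \<bar>sinh (2 * c)\<bar>" by (simp add: sinh_double abs_mult)
  finally show ?thesis .
qed

lemma sum_Pow_insert:
  assumes "finite A" "a \<notin> A"
  shows "(\<Sum>S\<in>Pow (insert a A). f S) = (\<Sum>S\<in>Pow A. f S) + (\<Sum>S\<in>Pow A. f (insert a S))"
proof -
  have inj: "inj_on (insert a) (Pow A)" using assms(2) unfolding inj_on_def by (metis Pow_iff insert_absorb insert_ident subset_iff)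
  have disj: "Pow A \<inter> insert a ` Pow A = {}" using assms(2) by auto
  have "(\<Sum>S\<in>Pow (insert a A). f S) = (\<Sum>S\<in>Pow A \<union> insert a ` Pow A. f S)"
    by (simp add: Pow_insert)
  also have "\<dots> = (\<Sum>S\<in>Pow A. f S) + (\<Sum>S\<in>insert a ` Pow A. f S)"
    by (rule sum.union_disjoint) (use assms disj in auto)
  also have "(\<Sum>S\<in>insert a ` Pow A. f S) = (\<Sum>S\<in>Pow A. f (insert a S))"
    by (rule sum.reindex_cong[OF inj]) auto
  finally show ?thesis .
qed

lemma pow_fact_le_exp:
  assumes "0 \<le> x"
  shows "x^n / fact n \<le> exp (x::real)"
proof -
  have s: "(\<lambda>m. x^m / fact m) sums exp x"
  proof -
    have "(\<lambda>m. x^m /\<^sub>R fact m) = (\<lambda>m. x^m / fact m)" by (rule ext) (simp add: divide_inverse_commute)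
    then show ?thesis using exp_converges[of x] by simp
  qed
  have "(\<Sum>m\<in>{n}. x^m / fact m) \<le> (\<Sum>m. x^m / fact m)"
    by (rule sum_le_suminf) (use s assms in \<open>auto simp: sums_iff\<close>)
  then show ?thesis using s by (simp add: sums_iff)
qed

lemma choose_fact_le:
  "(N choose r) * fact r \<le> (N::nat) ^ r"
proof (cases "r \<le> N")
  case True
  have "fact r * fact (N - r) * (N choose r) = fact N" by (rule binomial_fact_lemma[OF True])
  then have "(N choose r) * fact r = fact N div fact (N - r)"
    by (metis fact_gt_zero nonzero_mult_div_cancel_right mult.commute not_less0 mult.assoc)
  also have "\<dots> \<le> N ^ r" by (rule fact_div_fact_le_pow[OF True])
  finally show ?thesis .
next
  case False
  then show ?thesis by (simp add: binomial_eq_0)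
qed

definition wgt :: "real \<Rightarrow> real \<Rightarrow> nat \<Rightarrow> nat set \<Rightarrow> real" where
  "wgt ch sh m S = ch ^ (m - card S) * sh ^ card S"

lemma path_bound:
  fixes x :: "nat \<Rightarrow> pauli list \<Rightarrow> complex" and Qs :: "nat \<Rightarrow> pauli list"
  assumes ch: "0 \<le> ch" and sh: "0 \<le> sh"
    and Ql: "\<And>j. length (Qs j) = n"
    and rec: "\<And>j R. R \<in> strs n \<Longrightarrow> cmod (x (Suc j) R) \<le> ch * cmod (x j R) + sh * cmod (x j (pmul (Qs (Suc j)) R))"
    and x0: "\<And>R. R \<in> strs n \<Longrightarrow> cmod (x 0 R) \<le> (if supp R = {} then 1 else 0)"
  shows "R \<in> strs n \<Longrightarrow> cmod (x m R) \<le> (\<Sum>S\<in>Pow {1..m}. wgt ch sh m S * (if supp R \<subseteq> (\<Union>i\<in>S. supp (Qs i)) then 1 else 0))"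
proof (induction m arbitrary: R)
  case 0
  then show ?case using x0[OF 0] by (simp add: wgt_def)
next
  case (Suc m)
  let ?ind = "\<lambda>R S. (if supp R \<subseteq> (\<Union>i\<in>S. supp (Qs i)) then 1 else 0 :: real)"
  let ?R' = "pmul (Qs (Suc m)) R"
  have R': "?R' \<in> strs n" using Ql by (simp add: strs_def)
  have cardS: "card S \<le> m" if "S \<in> Pow {1..m}" for S
    using that card_mono[of "{1..m}" S] by auto
  have fin: "finite S" if "S \<in> Pow {1..m}" for S using that finite_subset by auto
  have ind_mono: "?ind ?R' S \<le> ?ind R (insert (Suc m) S)" for S
  proof -
    have "supp R \<subseteq> supp (pmul R (Qs (Suc m))) \<union> supp (Qs (Suc m))"
      using Suc.prems Ql by (intro supp_pmul) (simp add: strs_def)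
    moreover have "pmul R (Qs (Suc m)) = ?R'" using Suc.prems Ql by (intro pmul_comm) (simp add: strs_def)
    ultimately show ?thesis by auto
  qed
  have "cmod (x (Suc m) R) \<le> ch * cmod (x m R) + sh * cmod (x m ?R')"
    by (rule rec[OF Suc.prems])
  also have "\<dots> \<le> ch * (\<Sum>S\<in>Pow {1..m}. wgt ch sh m S * ?ind R S) + sh * (\<Sum>S\<in>Pow {1..m}. wgt ch sh m S * ?ind ?R' S)"
    by (intro add_mono mult_left_mono Suc.IH Suc.prems R' ch sh)
  also have "\<dots> \<le> (\<Sum>S\<in>Pow {1..m}. wgt ch sh (Suc m) S * ?ind R S) + (\<Sum>S\<in>Pow {1..m}. wgt ch sh (Suc m) (insert (Suc m) S) * ?ind R (insert (Suc m) S))"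
  proof (intro add_mono)
    show "ch * (\<Sum>S\<in>Pow {1..m}. wgt ch sh m S * ?ind R S) \<le> (\<Sum>S\<in>Pow {1..m}. wgt ch sh (Suc m) S * ?ind R S)"
      unfolding sum_distrib_left
    proof (intro sum_mono)
      fix S assume S: "S \<in> Pow {1..m}"
      have "Suc m - card S = Suc (m - card S)" using cardS[OF S] by simp
      then show "ch * (wgt ch sh m S * ?ind R S) \<le> wgt ch sh (Suc m) S * ?ind R S"
        by (simp add: wgt_def)
    qed
    show "sh * (\<Sum>S\<in>Pow {1..m}. wgt ch sh m S * ?ind ?R' S) \<le> (\<Sum>S\<in>Pow {1..m}. wgt ch sh (Suc m) (insert (Suc m) S) * ?ind R (insert (Suc m) S))"
      unfolding sum_distrib_left
    proof (intro sum_mono)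
      fix S assume S: "S \<in> Pow {1..m}"
      have nS: "Suc m \<notin> S" using S by auto
      have w: "wgt ch sh (Suc m) (insert (Suc m) S) = sh * wgt ch sh m S"
        using nS fin[OF S] by (simp add: wgt_def)
      have "0 \<le> sh * wgt ch sh m S" using ch sh by (simp add: wgt_def)
      then show "sh * (wgt ch sh m S * ?ind ?R' S) \<le> wgt ch sh (Suc m) (insert (Suc m) S) * ?ind R (insert (Suc m) S)"
        unfolding w using ind_mono[of S] by (simp add: mult.assoc[symmetric] mult_left_mono)
    qed
  qed
  also have "\<dots> = (\<Sum>S\<in>Pow {1..Suc m}. wgt ch sh (Suc m) S * ?ind R S)"
    using sum_Pow_insert[of "{1..m}" "Suc m" "\<lambda>S. wgt ch sh (Suc m) S * ?ind R S"]
    by (simp add: atLeastAtMostSuc_conv)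
  finally show ?case .
qed

lemma count_bound:
  assumes "finite U" and ch: "0 \<le> ch" and s: "0 \<le> s" and e: "0 \<le> e" and shd: "sh = s * e" and ed: "e = ch + sh"
  shows "(\<Sum>S\<in>Pow U. ch^(card U - card S) * sh^(card S) * (if r \<le> card (S \<inter> T) then 1 else 0))
         \<le> real (card (U \<inter> T) choose r) * s^r * e^(card U)"
  using assms(1)
proof (induction U arbitrary: r rule: finite_induct)
  case empty
  then show ?case by (cases r) auto
next
  case (insert x U)
  let ?w = "\<lambda>S. ch^(card U - card S) * sh^(card S)"
  let ?N = "card (U \<inter> T)"
  have sh: "0 \<le> sh" using shd s e by simp
  have w0: "0 \<le> ?w S" for S using ch sh by simp
  have finS: "finite S" if "S \<in> Pow U" for S using that insert(1) finite_subset by auto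
  have cS: "card S \<le> card U" if "S \<in> Pow U" for S using that insert(1) card_mono by auto
  have xS: "x \<notin> S" if "S \<in> Pow U" for S using that insert(2) by auto
  have split: "(\<Sum>S\<in>Pow (insert x U). ch^(card (insert x U) - card S) * sh^(card S) * (if r \<le> card (S \<inter> T) then 1 else 0))
     = ch * (\<Sum>S\<in>Pow U. ?w S * (if r \<le> card (S \<inter> T) then 1 else 0))
       + sh * (\<Sum>S\<in>Pow U. ?w S * (if r \<le> card (insert x S \<inter> T) then 1 else 0))"
    unfolding sum_Pow_insert[OF insert(1,2)] sum_distrib_left
  proof (intro arg_cong2[where f="(+)"] sum.cong refl)
    fix S assume S: "S \<in> Pow U"
    have "card (insert x U) - card S = Suc (card U - card S)" using cS[OF S] insert by simp
    then show "ch^(card (insert x U) - card S) * sh^(card S) * (if r \<le> card (S \<inter> T) then 1 else 0)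
        = ch * (?w S * (if r \<le> card (S \<inter> T) then 1 else 0))" by (simp add: mult_ac)
    have "card (insert x U) - card (insert x S) = card U - card S"
      using insert xS[OF S] finS[OF S] by simp
    then show "ch^(card (insert x U) - card (insert x S)) * sh^(card (insert x S)) * (if r \<le> card (insert x S \<inter> T) then 1 else 0)
        = sh * (?w S * (if r \<le> card (insert x S \<inter> T) then 1 else 0))"
      using xS[OF S] finS[OF S] by (simp add: mult_ac)
  qed
  show ?case
  proof (cases "x \<in> T")
    case False
    have eqi: "insert x S \<inter> T = S \<inter> T" for S using False by auto
    have UT: "insert x U \<inter> T = U \<inter> T" using False by auto
    let ?Sm = "\<Sum>S\<in>Pow U. ?w S * (if r \<le> card (S \<inter> T) then 1 else 0)"
    have "?Sm \<le> real (?N choose r) * s^r * e^(card U)" by (rule insert.IH)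
    then have "e * ?Sm \<le> e * (real (?N choose r) * s^r * e^(card U))" by (rule mult_left_mono) (rule e)
    moreover have "ch * ?Sm + sh * ?Sm = e * ?Sm" unfolding ed by (simp only: distrib_right)
    moreover have "e * (real (?N choose r) * s^r * e^(card U)) = real (card (insert x U \<inter> T) choose r) * s^r * e^(card (insert x U))"
      unfolding UT using insert(1,2) by (simp add: mult_ac)
    ultimately show ?thesis unfolding split eqi by simp
  next
    case True
    have eqi: "card (insert x S \<inter> T) = Suc (card (S \<inter> T))" if "S \<in> Pow U" for S
      using True xS[OF that] finS[OF that] by (simp add: Int_insert_left)
    have Nc: "card (insert x U \<inter> T) = Suc ?N" using True insert(1,2) by (simp add: Int_insert_left)
    show ?thesis
    proof (cases r)
      case 0
      have "(\<Sum>S\<in>Pow U. ?w S * (if 0 \<le> card (S \<inter> T) then 1 else 0)) \<le> real (?N choose 0) * s^0 * e^(card U)"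
        by (rule insert.IH)
      then have "(\<Sum>S\<in>Pow U. ?w S) \<le> e^(card U)" by simp
      then have "e * (\<Sum>S\<in>Pow U. ?w S) \<le> e * e^(card U)" by (rule mult_left_mono) (rule e)
      then show ?thesis unfolding split using insert(1,2) by (simp add: 0 ed[symmetric] distrib_right[symmetric])
    next
      case (Suc r')
      have sum2: "(\<Sum>S\<in>Pow U. ?w S * (if r \<le> card (insert x S \<inter> T) then 1 else 0))
            = (\<Sum>S\<in>Pow U. ?w S * (if r' \<le> card (S \<inter> T) then 1 else 0))"
        by (intro sum.cong refl) (simp add: eqi Suc)
      have i1: "ch * (\<Sum>S\<in>Pow U. ?w S * (if r \<le> card (S \<inter> T) then 1 else 0)) \<le> ch * (real (?N choose r) * s^r * e^(card U))"
        by (intro mult_left_mono insert.IH ch)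
      have i2: "sh * (\<Sum>S\<in>Pow U. ?w S * (if r' \<le> card (S \<inter> T) then 1 else 0)) \<le> sh * (real (?N choose r') * s^r' * e^(card U))"
        by (intro mult_left_mono insert.IH sh)
      have i3: "ch * (real (?N choose r) * s^r * e^(card U)) \<le> e * (real (?N choose r) * s^r * e^(card U))"
        by (intro mult_right_mono) (use ed sh s e in auto)
      have i4: "sh * (real (?N choose r') * s^r' * e^(card U)) = e * (real (?N choose r') * s^r * e^(card U))"
        unfolding shd Suc by (simp add: mult_ac)
      have "real (Suc ?N choose r) = real (?N choose r) + real (?N choose r')"
        unfolding Suc by simp
      then have fin: "e * (real (?N choose r) * s^r * e^(card U)) + e * (real (?N choose r') * s^r * e^(card U))
          = real (card (insert x U \<inter> T) choose r) * s^r * e^(card (insert x U))"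
        unfolding Nc using insert(1,2) by (simp add: algebra_simps)
      show ?thesis unfolding split sum2 using i1 i2 i3 i4 fin by linarith
    qed
  qed
qed

lemma cyc_trace:
  assumes X: "X \<in> carrier_mat d d" and Z: "Z \<in> carrier_mat d d" and E: "E \<in> carrier_mat d d"
  shows "mtrace (X * (E * Z * E)) = mtrace ((E * X * E) * Z)"
proof -
  have "X * (E * Z * E) = (X * E * Z) * E"
    by (simp only: assoc_mult_mat[OF E Z E] assoc_mult_mat[OF mult_carrier_mat[OF X E] Z E] assoc_mult_mat[OF X E mult_carrier_mat[OF Z E]])
  then have "mtrace (X * (E * Z * E)) = mtrace ((X * E * Z) * E)" by simp
  also have "\<dots> = mtrace (E * (X * E * Z))"
    by (rule mtrace_comm[OF mult_carrier_mat[OF mult_carrier_mat[OF X E] Z] E])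
  also have "E * (X * E * Z) = (E * X * E) * Z"
    by (simp only: assoc_mult_mat[OF mult_carrier_mat[OF E X] E Z] assoc_mult_mat[OF E X mult_carrier_mat[OF E Z]] assoc_mult_mat[OF X E Z])
  finally show ?thesis .
qed

lemma cosh_le_abs: assumes a: "\<bar>x\<bar> \<le> y" shows "cosh x \<le> cosh (y::real)"
proof -
  have "cosh x = cosh \<bar>x\<bar>" by (cases "x \<ge> 0") (auto simp: cosh_minus)
  also have "\<dots> \<le> cosh y" using a by (subst cosh_real_nonneg_le_iff) auto
  finally show ?thesis .
qed

lemma sinh_le_abs: assumes a: "\<bar>x\<bar> \<le> y" shows "\<bar>sinh x\<bar> \<le> sinh (y::real)"
proof -
  have "\<bar>sinh x\<bar> = sinh \<bar>x\<bar>"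
  proof (cases "x \<ge> 0")
    case True then show ?thesis by simp
  next
    case False
    then have "sinh x < 0" by simp
    then show ?thesis using False by (simp add: sinh_minus)
  qed
  also have "\<dots> \<le> sinh y" by (rule iffD2[OF sinh_real_le_iff]) (rule a)
  finally show ?thesis .
qed

locale setup16 =
  fixes n w ell p k :: nat
    and T :: "'a set" and lam :: "'a \<Rightarrow> real" and Q :: "'a \<Rightarrow> pauli list"
    and ord :: "'a list" and \<delta> :: real and Obs :: "complex mat"
  assumes Qlen: "\<forall>a\<in>T. length (Q a) = n"
    and lam_bd: "\<forall>a\<in>T. \<bar>lam a\<bar> \<le> 1"
    and wt: "\<forall>a\<in>T. weight (Q a) \<le> w"
    and deg: "\<forall>q<n. card {a\<in>T. q \<in> supp (Q a)} \<le> ell"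
    and dist: "distinct ord" and setord: "set ord = T"
    and delta: "\<delta> > 0"
    and kpos: "k \<ge> 1"
    and Obs_dim: "Obs \<in> carrier_mat (2^n) (2^n)"
    and g_le: "2 * exp 1 * ((real p + 1) * \<delta>) * real ell * real w * exp \<delta> \<le> 1"
    and ne: "ord \<noteq> []"
begin

abbreviation "M \<equiv> length ord"
abbreviation "L \<equiv> (p + 1) * M"
abbreviation "Fm \<equiv> (\<lambda>j X. Mmap n (\<delta> * lam (term_at ord j)) (Q (term_at ord j)) X)"
abbreviation "Gm \<equiv> (\<lambda>j X. trunc n k (Madj n (\<delta> * lam (term_at ord j)) (Q (term_at ord j)) X))"

definition "QQ j = Q (term_at ord j)"
definition "cc j = \<delta> * lam (term_at ord j)"
definition "EE j = Emat n (cc j) (QQ j)"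
definition "A j = fwd Fm (1\<^sub>m (2^n)) j"
definition "Ob i = bwd Gm L Obs i"
definition "Ot t = Ob (L - t)"
definition "YY t = EE (Suc t) * Ot (Suc t) * EE (Suc t)"
definition "HH t = mtrace (Ot t * A t)"
definition "gg = 2 * exp 1 * ((real p + 1) * \<delta>) * real ell * real w * exp \<delta>"
definition "rk = nat \<lceil>real k / real w\<rceil>"

lemma Mpos: "M > 0" using ne by simp

lemma tm_in: "term_at ord j \<in> T"
  using Mpos setord unfolding term_at_def by auto

lemma QQ_len[simp]: "length (QQ j) = n" using Qlen tm_in by (simp add: QQ_def)

lemma cc_bd: "\<bar>cc j\<bar> \<le> \<delta>"
proof -
  have "\<bar>lam (term_at ord j)\<bar> \<le> 1" using lam_bd tm_in by blast
  then have "\<delta> * \<bar>lam (term_at ord j)\<bar> \<le> \<delta> * 1" using delta by (intro mult_left_mono) auto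
  then show ?thesis using delta by (simp add: cc_def abs_mult)
qed

lemma EE_carrier[simp]: "EE j \<in> carrier_mat (2^n) (2^n)" by (simp add: EE_def)

lemma Fm_eq: "Fm j X = EE j * X * EE j"
  unfolding Mmap_def EE_def cc_def QQ_def using mexp_pauli[OF QQ_len[unfolded QQ_def]] by (simp only:)

lemma Gm_eq: "Gm j X = trunc n k (EE j * X * EE j)"
  unfolding Madj_def EE_def cc_def QQ_def using mexp_pauli[OF QQ_len[unfolded QQ_def]]
      ctrans_Emat[OF QQ_len[unfolded QQ_def]] by (simp only:)

lemma A_Suc: "A (Suc j) = EE (Suc j) * A j * EE (Suc j)"
  by (simp add: A_def Fm_eq)

lemma A_0: "A 0 = 1\<^sub>m (2^n)" by (simp add: A_def)

lemma A_carrier[simp]: "A j \<in> carrier_mat (2^n) (2^n)"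
proof (induction j)
  case 0 then show ?case by (simp add: A_0)
next
  case (Suc j) then show ?case unfolding A_Suc by (rule mult_carrier_mat[OF mult_carrier_mat[OF EE_carrier] EE_carrier])
qed

lemma Ob_carrier[simp]: "Ob i \<in> carrier_mat (2^n) (2^n)"
  by (cases i) (simp_all add: Ob_def Obs_dim)

lemma Ot_carrier[simp]: "Ot t \<in> carrier_mat (2^n) (2^n)" by (simp add: Ot_def)

lemma YY_carrier[simp]: "YY t \<in> carrier_mat (2^n) (2^n)"
  unfolding YY_def by (rule mult_carrier_mat[OF mult_carrier_mat[OF EE_carrier Ot_carrier] EE_carrier])

lemma Ot_L: "Ot L = Obs" by (simp add: Ot_def Ob_def)

lemma Ot_step: assumes t: "t < L" shows "Ot t = trunc n k (YY t)"
proof -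
  have e1: "L - t = Suc (L - Suc t)" using t by simp
  have e2: "L - (L - Suc t) = Suc t" using t by simp
  have "Ob (L - t) = Gm (L - (L - Suc t)) (Ob (L - Suc t))" unfolding e1 Ob_def by (simp only: bwd.simps)
  also have "\<dots> = Gm (Suc t) (Ob (L - Suc t))" unfolding e2 ..
  also have "\<dots> = trunc n k (EE (Suc t) * Ob (L - Suc t) * EE (Suc t))" by (rule Gm_eq)
  finally show ?thesis unfolding Ot_def YY_def .
qed

lemma HH_Suc: "HH (Suc t) = mtrace (YY t * A t)"
  unfolding HH_def A_Suc YY_def by (rule cyc_trace[of _ "2^n"]) simp_all

lemma HH_step: assumes "t < L" shows "HH t = mtrace (trunc n k (YY t) * A t)"
  unfolding HH_def Ot_step[OF assms] ..

lemma HH_0: "HH 0 = mtrace (bwd Gm L Obs L)"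
  unfolding HH_def Ot_def A_0 diff_zero unfolding right_mult_one_mat[OF Ob_carrier] unfolding Ob_def ..

lemma HH_L: "HH L = mtrace (Obs * fwd Fm (1\<^sub>m (2^n)) L)"
  unfolding HH_def A_def by (simp only: Ot_L)

end

context setup16
begin

lemma step_bound:
  assumes X: "X \<in> carrier_mat (2^n) (2^n)" and R: "R \<in> strs n"
  shows "cmod (pcoef n R (EE j * X * EE j)) \<le> cosh (2*\<delta>) * cmod (pcoef n R X) + sinh (2*\<delta>) * cmod (pcoef n (pmul (QQ j) R) X)"
proof -
  have Rl: "length R = n" using R by (simp add: strs_def)
  have c2: "\<bar>2 * cc j\<bar> \<le> 2*\<delta>" using cc_bd[of j] by (simp add: abs_mult)
  have a: "cmod (alph n (cc j) (QQ j) R) \<le> cosh (2*\<delta>)"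
    using alph_bound[of "QQ j" n "cc j" R] cosh_le_abs[OF c2] by simp
  have g: "cmod (gamm n (cc j) (QQ j) R) \<le> sinh (2*\<delta>)"
    using gamm_bound[of "QQ j" n "cc j" R] sinh_le_abs[OF c2] by simp
  have "pcoef n R (EE j * X * EE j) = alph n (cc j) (QQ j) R * pcoef n R X + gamm n (cc j) (QQ j) R * pcoef n (pmul (QQ j) R) X"
    unfolding EE_def by (rule pcoef_EXE[OF QQ_len Rl X])
  then have "cmod (pcoef n R (EE j * X * EE j)) \<le> cmod (alph n (cc j) (QQ j) R) * cmod (pcoef n R X) + cmod (gamm n (cc j) (QQ j) R) * cmod (pcoef n (pmul (QQ j) R) X)"
    by (metis norm_mult norm_triangle_ineq)
  also have "\<dots> \<le> cosh (2*\<delta>) * cmod (pcoef n R X) + sinh (2*\<delta>) * cmod (pcoef n (pmul (QQ j) R) X)"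
    by (intro add_mono mult_right_mono a g) auto
  finally show ?thesis .
qed

lemma sum_pmul_reindex:
  assumes "length P = n"
  shows "(\<Sum>R\<in>strs n. f (pmul P R)) = (\<Sum>R\<in>strs n. f R)"
  by (rule sum.reindex_bij_witness[of _ "pmul P" "pmul P"]) (use assms in \<open>auto simp: strs_def\<close>)

definition "Nn t = (\<Sum>R\<in>strs n. cmod (pcoef n R (Ot t)))"
definition "hh t = (\<Sum>R\<in>strs n. if weight R < k then 0 else cmod (pcoef n R (YY t)))"

lemma norm_rec:
  assumes t: "t < L"
  shows "Nn t + hh t \<le> exp (2*\<delta>) * Nn (Suc t)"
proof -
  have "Nn t + hh t = (\<Sum>R\<in>strs n. cmod (pcoef n R (YY t)))"
    unfolding Nn_def hh_def Ot_step[OF t] sum.distrib[symmetric]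
    by (intro sum.cong refl) (simp add: pcoef_trunc)
  also have "\<dots> \<le> (\<Sum>R\<in>strs n. cosh (2*\<delta>) * cmod (pcoef n R (Ot (Suc t))) + sinh (2*\<delta>) * cmod (pcoef n (pmul (QQ (Suc t)) R) (Ot (Suc t))))"
    unfolding YY_def by (intro sum_mono step_bound) simp_all
  also have "\<dots> = cosh (2*\<delta>) * Nn (Suc t) + sinh (2*\<delta>) * Nn (Suc t)"
    unfolding sum.distrib Nn_def sum_distrib_left[symmetric]
    using sum_pmul_reindex[OF QQ_len, of "\<lambda>R. cmod (pcoef n R (Ot (Suc t)))" "Suc t"] by simp
  also have "\<dots> = exp (2*\<delta>) * Nn (Suc t)" by (simp add: distrib_right[symmetric] cosh_plus_sinh)
  finally show ?thesis .
qed

lemma diff_bound: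
  assumes t: "t < L"
  shows "cmod (HH (Suc t) - HH t) \<le> 2^n * (\<Sum>R\<in>strs n. cmod (pcoef n R (A t)) * (if weight R < k then 0 else cmod (pcoef n R (YY t))))"
proof -
  have "HH (Suc t) - HH t = 2^n * (\<Sum>R\<in>strs n. pcoef n R (A t) * pcoef n R (YY t))
        - 2^n * (\<Sum>R\<in>strs n. pcoef n R (A t) * pcoef n R (trunc n k (YY t)))"
    unfolding HH_Suc HH_step[OF t] by (simp add: parseval[OF A_carrier])
  also have "\<dots> = 2^n * (\<Sum>R\<in>strs n. pcoef n R (A t) * (if weight R < k then 0 else pcoef n R (YY t)))"
    unfolding right_diff_distrib[symmetric] sum_subtractf[symmetric]
    by (intro arg_cong2[where f="(*)"] sum.cong refl) (auto simp: pcoef_trunc)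
  finally have "cmod (HH (Suc t) - HH t) = 2^n * cmod (\<Sum>R\<in>strs n. pcoef n R (A t) * (if weight R < k then 0 else pcoef n R (YY t)))"
    by (simp add: norm_mult norm_power)
  also have "\<dots> \<le> 2^n * (\<Sum>R\<in>strs n. cmod (pcoef n R (A t) * (if weight R < k then 0 else pcoef n R (YY t))))"
    by (intro mult_left_mono norm_sum) auto
  also have "\<dots> = 2^n * (\<Sum>R\<in>strs n. cmod (pcoef n R (A t)) * (if weight R < k then 0 else cmod (pcoef n R (YY t))))"
    by (intro arg_cong2[where f="(*)"] sum.cong refl) (simp add: norm_mult)
  finally show ?thesis .
qed

end

context setup16
begin

lemma finT: "finite T" using setord by auto

lemma occ:
  assumes a: "a \<in> T"
  shows "card {i\<in>{1..L}. term_at ord i = a} \<le> p + 1"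
proof -
  obtain ia where ia: "ia < M" "ord ! ia = a" using a setord by (auto simp: in_set_conv_nth)
  have sub: "{i\<in>{1..L}. term_at ord i = a} \<subseteq> (\<lambda>q. ia + M*q + 1) ` {..p}"
  proof
    fix i assume "i \<in> {i\<in>{1..L}. term_at ord i = a}"
    then have i1: "1 \<le> i" and iL: "i \<le> L" and ti: "ord ! ((i - 1) mod M) = ord ! ia"
      using ia by (auto simp: term_at_def)
    have "(i - 1) mod M < M" using Mpos by simp
    then have md: "(i - 1) mod M = ia" using ti ia(1) dist by (simp add: nth_eq_iff_index_eq)
    have "i - 1 < (p+1) * M" using i1 iL by simp
    then have "(i - 1) div M < p + 1" using div_less_iff_less_mult[OF Mpos, of "i - 1" "p+1"] by blast
    then have qd: "(i - 1) div M \<le> p" by simp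
    have "i - 1 = M * ((i - 1) div M) + ia" using md by (metis div_mult_mod_eq mult.commute)
    then have "i = ia + M * ((i - 1) div M) + 1" using i1 by simp
    then show "i \<in> (\<lambda>q. ia + M*q + 1) ` {..p}" using qd by blast
  qed
  have "card {i\<in>{1..L}. term_at ord i = a} \<le> card ((\<lambda>q. ia + M*q + 1) ` {..p})"
    by (rule card_mono[OF _ sub]) simp
  also have "\<dots> \<le> card {..p}" by (rule card_image_le) simp
  finally show ?thesis by simp
qed

lemma occ_q:
  assumes q: "q < n"
  shows "card {i\<in>{1..L}. q \<in> supp (QQ i)} \<le> (p + 1) * ell"
proof -
  let ?A = "{a\<in>T. q \<in> supp (Q a)}"
  have sub: "{i\<in>{1..L}. q \<in> supp (QQ i)} \<subseteq> (\<Union>a\<in>?A. {i\<in>{1..L}. term_at ord i = a})"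
    using tm_in by (auto simp: QQ_def)
  have "card {i\<in>{1..L}. q \<in> supp (QQ i)} \<le> card (\<Union>a\<in>?A. {i\<in>{1..L}. term_at ord i = a})"
    by (rule card_mono[OF _ sub]) (rule finite_subset[of _ "{1..L}"], auto)
  also have "\<dots> \<le> (\<Sum>a\<in>?A. card {i\<in>{1..L}. term_at ord i = a})"
    by (rule card_UN_le) (simp add: finT)
  also have "\<dots> \<le> card ?A * (p + 1)"
  proof -
    have "\<And>a. a \<in> ?A \<Longrightarrow> card {i\<in>{1..L}. term_at ord i = a} \<le> p + 1" using occ by auto
    then have "(\<Sum>a\<in>?A. card {i\<in>{1..L}. term_at ord i = a}) \<le> of_nat (card ?A) * (p + 1)" by (rule sum_bounded_above)
    then show ?thesis by simp
  qed
  also have "\<dots> \<le> ell * (p + 1)" using deg q by (intro mult_right_mono) auto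
  finally show ?thesis by (simp add: mult.commute)
qed

lemma touch:
  assumes R: "R \<in> strs n" and m: "m \<le> L"
  shows "card ({1..m} \<inter> {i. supp (QQ i) \<inter> supp R \<noteq> {}}) \<le> (p + 1) * ell * weight R"
proof -
  have sub: "{1..m} \<inter> {i. supp (QQ i) \<inter> supp R \<noteq> {}} \<subseteq> (\<Union>q\<in>supp R. {i\<in>{1..L}. q \<in> supp (QQ i)})"
    using m by auto
  have fs: "finite (supp R)" by (simp add: supp_def)
  have "card ({1..m} \<inter> {i. supp (QQ i) \<inter> supp R \<noteq> {}}) \<le> card (\<Union>q\<in>supp R. {i\<in>{1..L}. q \<in> supp (QQ i)})"
    by (rule card_mono[OF _ sub]) (rule finite_subset[of _ "{1..L}"], auto)
  also have "\<dots> \<le> (\<Sum>q\<in>supp R. card {i\<in>{1..L}. q \<in> supp (QQ i)})"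
    by (rule card_UN_le[OF fs])
  also have "\<dots> \<le> card (supp R) * ((p + 1) * ell)"
  proof -
    have "\<And>q. q \<in> supp R \<Longrightarrow> card {i\<in>{1..L}. q \<in> supp (QQ i)} \<le> (p + 1) * ell"
      using occ_q R by (auto simp: supp_def strs_def)
    then have "(\<Sum>q\<in>supp R. card {i\<in>{1..L}. q \<in> supp (QQ i)}) \<le> of_nat (card (supp R)) * ((p + 1) * ell)"
      by (rule sum_bounded_above)
    then show ?thesis by simp
  qed
  finally show ?thesis by (simp add: weight_def mult.commute)
qed

lemma s_bound: "sinh (2*\<delta>) / exp (2*\<delta>) \<le> 2*\<delta>"
proof -
  have "sinh (2*\<delta>) / exp (2*\<delta>) = (1 - exp (-(4*\<delta>))) / 2"
    by (simp add: sinh_def field_simps exp_minus flip: exp_add)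
  also have "\<dots> \<le> (4*\<delta>) / 2" using exp_ge_add_one_self[of "-(4*\<delta>)"] by simp
  finally show ?thesis by simp
qed

end

context setup16
begin

lemma gg_nonneg: "0 \<le> gg" using delta by (simp add: gg_def)
lemma gg_le1: "gg \<le> 1" using g_le by (simp add: gg_def)

lemma numeric_bound:
  assumes wpos: "w > 0" and NB: "N \<le> (p + 1) * ell * w * r" and s0: "0 \<le> s" and s2: "s \<le> 2*\<delta>"
    and rkr: "rk \<le> r"
  shows "real (N choose r) * s^r \<le> gg ^ rk"
proof -
  let ?b = "2 * ((real p + 1) * \<delta>) * real ell * real w"
  have b0: "0 \<le> ?b" using delta by simp
  have "real (N choose r) * fact r \<le> real N ^ r"
    using choose_fact_le[of N r] by (metis of_nat_fact of_nat_le_iff of_nat_mult of_nat_power)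
  then have c1: "real (N choose r) \<le> real N ^ r / fact r" by (simp add: field_simps)
  have "real (N choose r) * s^r \<le> real N ^ r / fact r * s^r"
    by (rule mult_right_mono[OF c1]) (simp add: s0)
  also have "\<dots> \<le> (real ((p + 1) * ell * w * r)) ^ r / fact r * (2*\<delta>)^r"
  proof -
    have NBr: "real N \<le> real ((p + 1) * ell * w * r)" by (simp only: of_nat_le_iff NB)
    show ?thesis by (intro mult_mono divide_right_mono power_mono) (use NBr s0 s2 in auto)
  qed
  also have "\<dots> = ?b ^ r * (real r ^ r / fact r)"
  proof -
    have eqb: "real ((p + 1) * ell * w * r) * (2*\<delta>) = ?b * real r" by (simp add: algebra_simps)
    have "(real ((p + 1) * ell * w * r)) ^ r / fact r * (2*\<delta>)^r = (real ((p + 1) * ell * w * r) * (2*\<delta>)) ^ r / fact r"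
      by (simp add: power_mult_distrib)
    also have "\<dots> = (?b * real r) ^ r / fact r" by (simp only: eqb)
    also have "\<dots> = ?b ^ r * (real r ^ r / fact r)" by (simp only: power_mult_distrib times_divide_eq_right)
    finally show ?thesis .
  qed
  also have "\<dots> \<le> ?b ^ r * exp (real r)"
    by (intro mult_left_mono pow_fact_le_exp) (use b0 in auto)
  also have "\<dots> = (exp 1 * ?b) ^ r"
    using exp_of_nat_mult[of r "1::real"] by (simp add: power_mult_distrib)
  also have "\<dots> \<le> gg ^ r"
  proof (rule power_mono)
    have "exp 1 * ?b * 1 \<le> exp 1 * ?b * exp \<delta>"
      by (rule mult_left_mono) (use b0 delta in auto)
    then show "exp 1 * ?b \<le> gg" by (simp add: gg_def mult_ac)
    show "0 \<le> exp 1 * ?b" using b0 by simp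
  qed
  also have "\<dots> \<le> gg ^ rk" by (rule power_decreasing[OF rkr gg_nonneg gg_le1])
  finally show ?thesis .
qed

lemma cover_count:
  assumes wpos: "w > 0" and R: "R \<in> strs n" and S: "finite S"
    and cov: "supp R \<subseteq> (\<Union>i\<in>S. supp (QQ i))"
  shows "weight R \<le> w * card (S \<inter> {i. supp (QQ i) \<inter> supp R \<noteq> {}})"
proof -
  let ?S = "S \<inter> {i. supp (QQ i) \<inter> supp R \<noteq> {}}"
  have "supp R \<subseteq> (\<Union>i\<in>?S. supp (QQ i))" using cov by blast
  then have "card (supp R) \<le> card (\<Union>i\<in>?S. supp (QQ i))"
    by (rule card_mono[rotated]) (use S in \<open>auto simp: supp_def\<close>)
  also have "\<dots> \<le> (\<Sum>i\<in>?S. card (supp (QQ i)))" by (rule card_UN_le) (use S in simp)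
  also have "\<dots> \<le> of_nat (card ?S) * w"
    by (rule sum_bounded_above) (use wt tm_in in \<open>auto simp: QQ_def weight_def\<close>)
  finally show ?thesis by (simp add: weight_def mult.commute)
qed

lemma A_bound:
  assumes R: "R \<in> strs n" and kR: "k \<le> weight R" and m: "m \<le> L"
  shows "cmod (pcoef n R (A m)) \<le> exp (2*\<delta>*m) * gg ^ rk"
proof -
  let ?ch = "cosh (2*\<delta>)" and ?sh = "sinh (2*\<delta>)" and ?e = "exp (2*\<delta>)" and ?s = "sinh (2*\<delta>) / exp (2*\<delta>)"
  have ch0: "0 \<le> ?ch" by (simp add: less_imp_le)
  have sh0: "0 \<le> ?sh" using delta by simp
  let ?ind = "\<lambda>S. (if supp R \<subseteq> (\<Union>i\<in>S. supp (QQ i)) then 1 else 0 :: real)"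
  have pb: "cmod (pcoef n R (A m)) \<le> (\<Sum>S\<in>Pow {1..m}. wgt ?ch ?sh m S * ?ind S)"
  proof (rule path_bound[where x = "\<lambda>j R. pcoef n R (A j)" and Qs = QQ, OF ch0 sh0 QQ_len _ _ R])
    fix j and R' :: "pauli list" assume R': "R' \<in> strs n"
    show "cmod (pcoef n R' (A (Suc j))) \<le> ?ch * cmod (pcoef n R' (A j)) + ?sh * cmod (pcoef n (pmul (QQ (Suc j)) R') (A j))"
      unfolding A_Suc by (rule step_bound[OF A_carrier R'])
  next
    fix R' :: "pauli list" assume R': "R' \<in> strs n"
    then have l: "length R' = n" by (simp add: strs_def)
    show "cmod (pcoef n R' (A 0)) \<le> (if supp R' = {} then 1 else 0)"
      unfolding A_0 pmat_Idn[symmetric] using l by (simp add: pcoef_pmat supp_empty_iff)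
  qed
  define Tt where "Tt = {i. supp (QQ i) \<inter> supp R \<noteq> {}}"
  define r where "r = (if w = 0 then 0 else (LEAST t. weight R \<le> w * t))"
  have ind_le: "?ind S \<le> (if r \<le> card (S \<inter> Tt) then 1 else 0)" if S: "S \<in> Pow {1..m}" for S
  proof (cases "w = 0")
    case True then show ?thesis by (simp add: r_def)
  next
    case False
    show ?thesis
    proof (cases "supp R \<subseteq> (\<Union>i\<in>S. supp (QQ i))")
      case True
      have fS: "finite S" using S finite_subset by auto
      have "weight R \<le> w * card (S \<inter> Tt)" unfolding Tt_def
        by (rule cover_count[OF _ R fS True]) (use False in simp)
      then have "r \<le> card (S \<inter> Tt)" unfolding r_def using False by (simp add: Least_le)
      then show ?thesis by simp
    next
      case False then show ?thesis by simp
    qed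
  qed
  have "(\<Sum>S\<in>Pow {1..m}. wgt ?ch ?sh m S * ?ind S)
      \<le> (\<Sum>S\<in>Pow {1..m}. ?ch^(card {1..m} - card S) * ?sh^(card S) * (if r \<le> card (S \<inter> Tt) then 1 else 0))"
  proof (rule sum_mono)
    fix S assume S: "S \<in> Pow {1..m}"
    have "0 \<le> wgt ?ch ?sh m S" using ch0 sh0 by (simp add: wgt_def)
    then show "wgt ?ch ?sh m S * ?ind S \<le> ?ch^(card {1..m} - card S) * ?sh^(card S) * (if r \<le> card (S \<inter> Tt) then 1 else 0)"
      using mult_left_mono[OF ind_le[OF S]] by (simp add: wgt_def)
  qed
  also have "\<dots> \<le> real (card ({1..m} \<inter> Tt) choose r) * ?s^r * ?e^(card {1..m})"
  proof (rule count_bound)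
    show "?sh = ?s * ?e" by simp
    show "?e = ?ch + ?sh" by (simp add: cosh_plus_sinh)
  qed (use ch0 sh0 in auto)
  also have "\<dots> = real (card ({1..m} \<inter> Tt) choose r) * ?s^r * exp (2*\<delta>*m)"
    using exp_of_nat_mult[of m "2*\<delta>"] by (simp add: mult.commute)
  also have "\<dots> \<le> gg ^ rk * exp (2*\<delta>*m)"
  proof (rule mult_right_mono)
    show "real (card ({1..m} \<inter> Tt) choose r) * ?s^r \<le> gg ^ rk"
    proof (cases "w = 0")
      case True
      then show ?thesis unfolding rk_def r_def by simp
    next
      case False
      then have wpos: "w > 0" by simp
      have ex: "\<exists>t. weight R \<le> w * t" using wpos by (intro exI[of _ "weight R"]) simp
      have wr: "weight R \<le> w * r" unfolding r_def using False LeastI_ex[OF ex] by simp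
      have NB: "card ({1..m} \<inter> Tt) \<le> (p + 1) * ell * w * r"
      proof -
        have "card ({1..m} \<inter> Tt) \<le> (p + 1) * ell * weight R" unfolding Tt_def by (rule touch[OF R m])
        also have "\<dots> \<le> (p + 1) * ell * (w * r)" using wr by (intro mult_left_mono) auto
        finally show ?thesis by (simp add: mult_ac)
      qed
      have rkr: "rk \<le> r"
      proof -
        have "real k \<le> real w * real r" using kR wr by (metis of_nat_le_iff of_nat_mult order_trans)
        then have "real k / real w \<le> real r" using wpos by (simp add: divide_le_eq mult.commute)
        then have c: "\<lceil>real k / real w\<rceil> \<le> int r" by (simp add: ceiling_le_iff)
        show ?thesis unfolding rk_def nat_le_iff by (rule c)
      qed
      have s0: "0 \<le> ?s" using sh0 by simp
      show ?thesis by (rule numeric_bound[OF wpos NB s0 s_bound rkr])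
    qed
  qed simp
  finally show ?thesis using pb by (simp add: mult.commute)
qed

end

context setup16
begin

lemma Nn_nonneg: "0 \<le> Nn t" by (simp add: Nn_def sum_nonneg)
lemma hh_nonneg: "0 \<le> hh t" by (simp add: hh_def sum_nonneg)

lemma step_total:
  assumes t: "t < L"
  shows "cmod (HH (Suc t) - HH t) \<le> 2^n * (exp (2*\<delta>*t) * gg ^ rk * hh t)"
proof -
  have "(\<Sum>R\<in>strs n. cmod (pcoef n R (A t)) * (if weight R < k then 0 else cmod (pcoef n R (YY t))))
      \<le> (\<Sum>R\<in>strs n. (exp (2*\<delta>*t) * gg ^ rk) * (if weight R < k then 0 else cmod (pcoef n R (YY t))))"
  proof (rule sum_mono)
    fix R assume R: "R \<in> strs n"
    show "cmod (pcoef n R (A t)) * (if weight R < k then 0 else cmod (pcoef n R (YY t)))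
        \<le> (exp (2*\<delta>*t) * gg ^ rk) * (if weight R < k then 0 else cmod (pcoef n R (YY t)))"
    proof (cases "weight R < k")
      case False
      have "cmod (pcoef n R (A t)) \<le> exp (2*\<delta>*t) * gg ^ rk"
        by (rule A_bound[OF R]) (use False t in auto)
      then show ?thesis using False by (simp add: mult_right_mono)
    qed simp
  qed
  also have "\<dots> = exp (2*\<delta>*t) * gg ^ rk * hh t" by (simp add: hh_def sum_distrib_left)
  finally show ?thesis using diff_bound[OF t] by (meson mult_left_mono order_trans zero_le_power zero_le_numeral)
qed

lemma telesc: "m \<le> L \<Longrightarrow> (\<Sum>t<m. exp (2*\<delta>*t) * hh t) \<le> exp (2*\<delta>*m) * Nn m - Nn 0"
proof (induction m)
  case 0 then show ?case by simp
next
  case (Suc m)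
  then have mL: "m < L" by simp
  have r: "Nn m + hh m \<le> exp (2*\<delta>) * Nn (Suc m)" by (rule norm_rec[OF mL])
  have i1: "exp (2*\<delta>*m) * (Nn m + hh m) \<le> exp (2*\<delta>*m) * (exp (2*\<delta>) * Nn (Suc m))"
    by (rule mult_left_mono[OF r]) simp
  have "exp (2*\<delta>*m) * exp (2*\<delta>) = exp (2*\<delta>*(Suc m))"
    by (simp add: exp_add[symmetric] algebra_simps)
  then have i2: "exp (2*\<delta>*m) * (exp (2*\<delta>) * Nn (Suc m)) = exp (2*\<delta>*(Suc m)) * Nn (Suc m)"
    by (simp only: mult.assoc[symmetric])
  have i3: "exp (2*\<delta>*m) * (Nn m + hh m) = exp (2*\<delta>*m) * Nn m + exp (2*\<delta>*m) * hh m"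
    by (simp only: distrib_left)
  have "exp (2*\<delta>*m) * hh m \<le> exp (2*\<delta>*(Suc m)) * Nn (Suc m) - exp (2*\<delta>*m) * Nn m"
    using i1 i2 i3 by linarith
  then show ?case using Suc.IH Suc.prems by simp
qed

lemma tri: "(cmod (HH m - HH 0)) \<le> (\<Sum>t<m. cmod (HH (Suc t) - HH t))"
proof (induction m)
  case 0 then show ?case by simp
next
  case (Suc m)
  have "cmod (HH (Suc m) - HH 0) \<le> cmod (HH (Suc m) - HH m) + cmod (HH m - HH 0)"
    using norm_triangle_ineq[of "HH (Suc m) - HH m" "HH m - HH 0"] by simp
  then show ?case using Suc.IH by simp
qed

lemma main_loc:
  "cmod (mtrace (bwd Gm L Obs L) - mtrace (Obs * fwd Fm (1\<^sub>m (2^n)) L))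
   \<le> 2^n * exp (4 * ((real p + 1) * \<delta>) * real M) * gg ^ rk * pauli_norm1 n Obs"
proof -
  have "cmod (mtrace (bwd Gm L Obs L) - mtrace (Obs * fwd Fm (1\<^sub>m (2^n)) L)) = cmod (HH L - HH 0)"
    unfolding HH_0[symmetric] HH_L[symmetric] by (rule norm_minus_commute)
  also have "\<dots> \<le> (\<Sum>t<L. cmod (HH (Suc t) - HH t))" by (rule tri)
  also have "\<dots> \<le> (\<Sum>t<L. 2^n * gg ^ rk * (exp (2*\<delta>*t) * hh t))"
    by (rule sum_mono) (use step_total in \<open>auto simp: mult_ac\<close>)
  also have "\<dots> = 2^n * gg ^ rk * (\<Sum>t<L. exp (2*\<delta>*t) * hh t)" by (simp add: sum_distrib_left)
  also have "\<dots> \<le> 2^n * gg ^ rk * (exp (2*\<delta>*L) * Nn L - Nn 0)"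
    by (rule mult_left_mono[OF telesc]) (use gg_nonneg in auto)
  also have "\<dots> \<le> 2^n * gg ^ rk * (exp (2*\<delta>*L) * Nn L)"
    by (rule mult_left_mono) (use gg_nonneg Nn_nonneg in auto)
  also have "\<dots> \<le> 2^n * gg ^ rk * (exp (4 * ((real p + 1) * \<delta>) * real M) * Nn L)"
  proof (intro mult_left_mono mult_right_mono)
    have "2*\<delta>*real L \<le> 4 * ((real p + 1) * \<delta>) * real M" using delta by (simp add: algebra_simps)
    then show "exp (2*\<delta>*L) \<le> exp (4 * ((real p + 1) * \<delta>) * real M)" by simp
  qed (use gg_nonneg Nn_nonneg in auto)
  also have "Nn L = pauli_norm1 n Obs" unfolding Nn_def Ot_L pauli_norm1_def pauli_strings_eq ..
  finally show ?thesis by (simp add: mult_ac)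
qed

end

theorem mainTheorem16:
  fixes n w ell p k :: nat
    and T :: "'a set" and lam :: "'a \<Rightarrow> real" and Q :: "'a \<Rightarrow> pauli list"
    and ord :: "'a list" and \<delta> :: real and Obs :: "complex mat"
  assumes Qlen: "\<forall>a\<in>T. length (Q a) = n"
    and lam_bd: "\<forall>a\<in>T. \<bar>lam a\<bar> \<le> 1"
    and wt: "\<forall>a\<in>T. weight (Q a) \<le> w"
    and deg: "\<forall>q<n. card {a\<in>T. q \<in> supp (Q a)} \<le> ell"
    and ord: "distinct ord" "set ord = T"
    and delta: "\<delta> > 0"
    and k: "k \<ge> 1"
    and Obs_dim: "Obs \<in> carrier_mat (2^n) (2^n)"
    and g_le: "2 * exp 1 * ((real p + 1) * \<delta>) * real ell * real w * exp \<delta> \<le> 1"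
  shows "cmod (mtrace (bwd (\<lambda>j X. trunc n k (Madj n (\<delta> * lam (term_at ord j)) (Q (term_at ord j)) X))
                        ((p + 1) * length ord) Obs ((p + 1) * length ord))
              - mtrace (Obs * fwd (\<lambda>j X. Mmap n (\<delta> * lam (term_at ord j)) (Q (term_at ord j)) X)
                        (1\<^sub>m (2^n)) ((p + 1) * length ord)))
         \<le> 2^n * exp (4 * ((real p + 1) * \<delta>) * real (length ord))
             * (2 * exp 1 * ((real p + 1) * \<delta>) * real ell * real w * exp \<delta>) ^ nat \<lceil>real k / real w\<rceil>
             * pauli_norm1 n Obs"
proof (cases "ord = []")
  case True
  have "0 \<le> 2 * exp 1 * ((real p + 1) * \<delta>) * real ell * real w * exp \<delta>" using delta by simp
  moreover have "0 \<le> pauli_norm1 n Obs" by (simp add: pauli_norm1_def sum_nonneg)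
  ultimately have "0 \<le> 2^n * exp (4 * ((real p + 1) * \<delta>) * real (length ord))
             * (2 * exp 1 * ((real p + 1) * \<delta>) * real ell * real w * exp \<delta>) ^ nat \<lceil>real k / real w\<rceil>
             * pauli_norm1 n Obs" by simp
  moreover have "Obs * 1\<^sub>m (2^n) = Obs" by (rule right_mult_one_mat[OF Obs_dim])
  ultimately show ?thesis using True by simp
next
  case False
  interpret S: setup16 n w ell p k T lam Q ord \<delta> Obs
    using assms False by unfold_locales auto
  show ?thesis using S.main_loc unfolding S.gg_def S.rk_def .
qed

end
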